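(* Let $P,Q$ be strings of the same positive length $p$, let $n$ be a positive integer, and let $d=\lfloor n/p\rfloor$ and $r=n\bmod p$. Let $X=P^*[0..n)$ and $Y=Q^*[0..n)$. Then \[ \mathrm{ED}(X,Y)\le \mathrm{ED}(P[0..r),Q[0..r))+\min_{s\in\mathbb Z}\big(d\cdot\mathrm{ED}(P,Q^{\circlearrowright s})+2|s|\big)\le 3\,\mathrm{ED}(X,Y). \]
   Context: $\mathrm{ED}$ is edit distance. $Z[i..j)$ denotes $Z[i]\cdots Z[j-1]$. For a string $Q$, $Q^*$ is the infinite string $QQQ\cdots$. For an integer $s$, the cyclic rotation $Q^{\circlearrowright s}$ is the string of length $|Q|$ with $Q^{\circlearrowright s}[i]=Q[(i+s)\bmod |Q|]$. *)

theory Defs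
  imports Main
begin

fun ED :: "'a list \<Rightarrow> 'a list \<Rightarrow> nat" where
  "ED [] ys = length ys"
| "ED (x # xs) [] = Suc (length xs)"
| "ED (x # xs) (y # ys) =
     min (min (ED xs (y # ys) + 1) (ED (x # xs) ys + 1))
         (ED xs ys + (if x = y then 0 else 1))"

text \<open>Prefix of length n of the infinite string Q Q Q ... (Q nonempty).\<close>
definition pow_prefix :: "'a list \<Rightarrow> nat \<Rightarrow> 'a list" where
  "pow_prefix Q n = map (\<lambda>i. Q ! (i mod length Q)) [0..<n]"

definition rot :: "'a list \<Rightarrow> int \<Rightarrow> 'a list" where
  "rot Q s = map (\<lambda>i. Q ! nat ((int i + s) mod int (length Q))) [0..<length Q]"

end

theory Submission
  imports Defs
begin


lemma ED_Nil2[simp]: "ED xs [] = length xs"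
  by (cases xs) auto

lemma ED_sym: "ED xs ys = ED ys xs"
  by (induction xs ys rule: ED.induct) (auto simp: min.commute min.left_commute)

lemma ED_cons1: "ED (x # xs) ys \<le> ED xs ys + 1"
  by (cases ys) auto

lemma ED_cons2: "ED xs (y # ys) \<le> ED xs ys + 1"
  by (cases xs) auto

lemma ED_app1: "ED (zs @ xs) ys \<le> length zs + ED xs ys"
  by (induction zs) (auto intro: order.trans[OF ED_cons1])

lemma ED_app2: "ED xs (zs @ ys) \<le> length zs + ED xs ys"
  by (induction zs) (auto intro: order.trans[OF ED_cons2])

lemma ED_len: "length xs \<le> ED xs ys + length ys" "length ys \<le> ED xs ys + length xs"
  by (induction xs ys rule: ED.induct) auto

lemma ED_subadd: "ED (a @ b) (c @ e) \<le> ED a c + ED b e"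
proof (induction a c rule: ED.induct)
  case (1 ys)
  then show ?case using ED_app2[of b ys e] by simp
next
  case (2 x xs)
  then show ?case using ED_app1[of "x#xs" b e] by simp
next
  case (3 x xs y ys)
  show ?case
  proof -
    have "ED ((x # xs) @ b) ((y # ys) @ e) = min (min (ED (xs@b) ((y # ys)@e) + 1) (ED ((x # xs)@b) (ys@e) + 1))
         (ED (xs@b) (ys@e) + (if x = y then 0 else 1))" by simp
    then show ?thesis using 3 by auto
  qed
qed

lemma ED_split: "\<exists>ys1 ys2. ys = ys1 @ ys2 \<and> ED (xs1 @ xs2) ys = ED xs1 ys1 + ED xs2 ys2"
proof (induction xs1 ys rule: ED.induct)
  case (1 ys)
  then show ?case by (intro exI[of _ "[]"] exI[of _ ys]) auto
next
  case (2 x xs)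
  then show ?case by (intro exI[of _ "[]"]) auto
next
  case (3 x a y c)
  have le: "ED (x # a @ xs2) (y # c) \<le> ED (x#a) ys1 + ED xs2 ys2" if "y # c = ys1 @ ys2" for ys1 ys2
    using ED_subadd[of "x#a" xs2 ys1 ys2] that by simp
  have eq: "ED (x # a @ xs2) (y # c) = min (min (ED (a @ xs2) (y # c) + 1) (ED (x # a @ xs2) c + 1))
         (ED (a @ xs2) c + (if x = y then 0 else 1))" by simp
  consider "ED (x # a @ xs2) (y # c) = ED (a @ xs2) (y # c) + 1"
    | "ED (x # a @ xs2) (y # c) = ED (x # a @ xs2) c + 1"
    | "ED (x # a @ xs2) (y # c) = ED (a @ xs2) c + (if x = y then 0 else 1)"
    using eq by linarith
  then show ?case
  proof cases
    case 1
    obtain ys1 ys2 where h: "y # c = ys1 @ ys2" "ED (a @ xs2) (y # c) = ED a ys1 + ED xs2 ys2"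
      using "3.IH"(1) by blast
    have "ED (x # a @ xs2) (y # c) \<ge> ED (x#a) ys1 + ED xs2 ys2"
      using 1 h(2) ED_cons1[of x a ys1] by linarith
    with le[OF h(1)] have "ED (x # a @ xs2) (y # c) = ED (x#a) ys1 + ED xs2 ys2" by linarith
    with h(1) show ?thesis by auto
  next
    case 2
    obtain ys1 ys2 where h: "c = ys1 @ ys2" "ED (x # a @ xs2) c = ED (x#a) ys1 + ED xs2 ys2"
      using "3.IH"(2) by auto
    have "ED (x # a @ xs2) (y # c) \<ge> ED (x#a) (y#ys1) + ED xs2 ys2"
      using 2 h(2) ED_cons2[of "x#a" y ys1] by linarith
    moreover have "ED (x # a @ xs2) (y # c) \<le> ED (x#a) (y#ys1) + ED xs2 ys2"
      using le[of "y#ys1" ys2] h(1) by simp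
    ultimately have "ED (x # a @ xs2) (y # c) = ED (x#a) (y#ys1) + ED xs2 ys2" by linarith
    moreover have "y # c = (y # ys1) @ ys2" using h(1) by simp
    ultimately show ?thesis by (metis append_Cons)
  next
    case 3
    obtain ys1 ys2 where h: "c = ys1 @ ys2" "ED (a @ xs2) c = ED a ys1 + ED xs2 ys2"
      using "3.IH"(3) by auto
    have "ED (x#a) (y#ys1) \<le> ED a ys1 + (if x = y then 0 else 1)" by simp
    then have "ED (x # a @ xs2) (y # c) \<ge> ED (x#a) (y#ys1) + ED xs2 ys2"
      using 3 h(2) by linarith
    moreover have "ED (x # a @ xs2) (y # c) \<le> ED (x#a) (y#ys1) + ED xs2 ys2"
      using le[of "y#ys1" ys2] h(1) by simp
    ultimately have "ED (x # a @ xs2) (y # c) = ED (x#a) (y#ys1) + ED xs2 ys2" by linarith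
    moreover have "y # c = (y # ys1) @ ys2" using h(1) by simp
    ultimately show ?thesis by (metis append_Cons)
  qed
qed

lemma ED_drop_pre: "ED xs ws \<le> ED xs (zs @ ws) + length zs"
proof -
  obtain x1 x2 where h: "xs = x1 @ x2" "ED (zs @ ws) xs = ED zs x1 + ED ws x2"
    using ED_split by blast
  have "ED ws xs \<le> ED [] x1 + ED ws x2" using ED_subadd[of "[]" ws x1 x2] h(1) by simp
  moreover have "length x1 \<le> ED zs x1 + length zs" using ED_len(2) by blast
  ultimately show ?thesis using h(2) ED_sym[of xs ws] ED_sym[of xs "zs@ws"] by simp
qed

lemma ED_drop_suf: "ED xs ws \<le> ED xs (ws @ zs) + length zs"
proof -
  obtain x1 x2 where h: "xs = x1 @ x2" "ED (ws @ zs) xs = ED ws x1 + ED zs x2"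
    using ED_split by blast
  have "ED ws xs \<le> ED ws x1 + ED [] x2" using ED_subadd[of ws "[]" x1 x2] h(1) by simp
  moreover have "length x2 \<le> ED zs x2 + length zs" using ED_len(2) by blast
  ultimately show ?thesis using h(2) ED_sym[of xs ws] ED_sym[of xs "ws@zs"] by simp
qed

lemma ED_add_pre: "ED xs (zs @ ws) \<le> ED xs ws + length zs"
  using ED_app2[of xs zs ws] by simp

lemma ED_add_suf: "ED xs (ws @ zs) \<le> ED xs ws + length zs"
  using ED_subadd[of xs "[]" ws zs] by simp

lemma ED_pref2:
  assumes "length xs = length ys" "ys = ws @ zs \<or> ws = ys @ zs"
  shows "ED xs ys \<le> 2 * ED xs ws"
proof (cases "ys = ws @ zs")
  case True
  then show ?thesis using assms ED_add_suf[of xs ws zs] ED_len[of xs ws] by auto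
next
  case False
  then have "ws = ys @ zs" using assms by auto
  moreover have "length ws \<le> ED xs ws + length xs" by (rule ED_len(2))
  ultimately show ?thesis using assms(1) ED_drop_suf[of xs ys zs] by simp
qed

lemma ED_suf2:
  assumes "length xs = length ys" "ys = zs @ ws \<or> ws = zs @ ys"
  shows "ED xs ys \<le> 2 * ED xs ws"
proof (cases "ys = zs @ ws")
  case True
  then show ?thesis using assms ED_add_pre[of xs zs ws] ED_len[of xs ws] by auto
next
  case False
  then have "ws = zs @ ys" using assms by auto
  moreover have "length ws \<le> ED xs ws + length xs" by (rule ED_len(2))
  ultimately show ?thesis using assms(1) ED_drop_pre[of xs ys zs] by simp
qed

lemma ED_rotA: "ED xs (A @ W) \<le> ED xs (W @ A) + 2 * length A"
proof -
  obtain x1 x2 where h: "xs = x1 @ x2" "ED (W @ A) xs = ED W x1 + ED A x2"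
    using ED_split by blast
  have "ED (x1 @ x2) (A @ W) \<le> length A + ED (x1 @ x2) W" using ED_app2 by blast
  moreover have "ED (x1 @ x2) (W @ []) \<le> ED x1 W + ED x2 []" by (rule ED_subadd)
  moreover have "length x2 \<le> ED A x2 + length A" using ED_len(2) by blast
  ultimately show ?thesis using h ED_sym[of xs "W@A"] ED_sym[of x1 W] by simp
qed

lemma ED_rotB: "ED xs (W @ A) \<le> ED xs (A @ W) + 2 * length A"
proof -
  obtain x1 x2 where h: "xs = x1 @ x2" "ED (A @ W) xs = ED A x1 + ED W x2"
    using ED_split by blast
  have "ED (x1 @ x2) (W @ A) \<le> ED (x1 @ x2) W + length A" using ED_add_suf by blast
  moreover have "ED (x1 @ x2) ([] @ W) \<le> ED x1 [] + ED x2 W" by (rule ED_subadd)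
  moreover have "length x1 \<le> ED A x1 + length A" using ED_len(2) by blast
  ultimately show ?thesis using h ED_sym[of xs "A@W"] ED_sym[of x2 W] by simp
qed

lemma ED_rep: "ED (concat (replicate d P)) (concat (replicate d R)) \<le> d * ED P R"
proof (induction d)
  case 0 then show ?case by simp
next
  case (Suc d)
  then show ?case using ED_subadd[of P "concat (replicate d P)" R "concat (replicate d R)"] by simp
qed

lemma ED_decomp:
  "\<exists>Ys Yt. length Ys = length Bs \<and> ys = concat Ys @ Yt \<and>
     ED (concat Bs @ T) ys = (\<Sum>j<length Bs. ED (Bs!j) (Ys!j)) + ED T Yt"
proof (induction Bs arbitrary: ys)
  case Nil then show ?case by simp
next
  case (Cons B Bs)
  obtain y1 y2 where h: "ys = y1 @ y2" "ED (B @ (concat Bs @ T)) ys = ED B y1 + ED (concat Bs @ T) y2"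
    using ED_split by blast
  obtain Ys Yt where h2: "length Ys = length Bs" "y2 = concat Ys @ Yt"
     "ED (concat Bs @ T) y2 = (\<Sum>j<length Bs. ED (Bs!j) (Ys!j)) + ED T Yt"
    using Cons.IH by blast
  show ?case
    apply (rule exI[of _ "y1 # Ys"], rule exI[of _ Yt])
    using h h2 by (simp add: sum.lessThan_Suc_shift del: sum.lessThan_Suc)
qed



lemma map_P: "map (\<lambda>i. P!(i mod length P)) [0..<length P] = P"
  by (rule nth_equalityI) auto

lemma pp_split:
  assumes "P \<noteq> []" "m \<le> length P"
  shows "map (\<lambda>i. P!(i mod length P)) [0..<k*length P + m] = concat (replicate k P) @ take m P"
proof (induction k)
  case 0
  show ?case using assms by (intro nth_equalityI) auto
next
  case (Suc k)
  let ?f = "\<lambda>i. P!(i mod length P)"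
  let ?L = "length P"
  have "[0..<Suc k * ?L + m] = [0..<?L] @ [?L..<?L + (k*?L+m)]"
    using upt_add_eq_append[of 0 ?L "k*?L+m"] by (simp add: add.assoc)
  moreover have "[?L..<?L + (k*?L+m)] = map (\<lambda>i. i + ?L) [0..<k*?L+m]"
    using map_add_upt[of ?L "k*?L+m"] by (simp add: add.commute)
  moreover have "map ?f (map (\<lambda>i. i + ?L) [0..<k*?L+m]) = map ?f [0..<k*?L+m]"
    by simp
  ultimately show ?case using Suc map_P[of P] by simp
qed

lemma int_mod_neg: "0 < (p::int) \<Longrightarrow> s < 0 \<Longrightarrow> s + p \<le> s mod p"
  by (metis add.commute add_less_same_cancel1 mod_add_self1
    mod_pos_pos_trivial nle_le order.trans pos_mod_sign)

lemma aux1: "s + int i * int L = int y \<Longrightarrow> (s + int k) mod int L = int ((k + y) mod L)"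
  by (metis (no_types, opaque_lifting) add.commute int_ops(9)
    mod_add_right_eq mod_mult_self2 mult.commute zadd_int_left)

lemma aux2: "0 < L \<Longrightarrow> nat ((int k + s) mod int L) = (k + nat (s mod int L)) mod L"
  by (simp add: mod_add_right_eq nat_mod_as_int)


lemma rot_eq:
  assumes "Q \<noteq> []" "s = int y - int (i * length Q)"
  shows "rot Q s = map (\<lambda>k. Q!(k mod length Q)) [y..<y + length Q]"
proof (rule nth_equalityI)
  show "length (rot Q s) = length (map (\<lambda>k. Q!(k mod length Q)) [y..<y + length Q])"
    by (simp add: rot_def)
next
  fix k assume "k < length (rot Q s)"
  then have k: "k < length Q" by (simp add: rot_def)
  have "(int k + s) mod int (length Q) = int ((y + k) mod length Q)"
    using assms(2) aux1[of s i "length Q" y k] by (simp add: add.commute)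
  then show "rot Q s ! k = map (\<lambda>k. Q!(k mod length Q)) [y..<y + length Q] ! k"
    using k by (simp add: rot_def)
qed

lemma rot_rotate:
  assumes "Q \<noteq> []"
  shows "rot Q s = drop (nat (s mod int (length Q))) Q @ take (nat (s mod int (length Q))) Q"
proof -
  let ?t = "nat (s mod int (length Q))"
  have t: "?t < length Q" using assms by (simp add: nat_less_iff)
  have "rot Q s = rotate ?t Q"
  proof (rule nth_equalityI)
    show "length (rot Q s) = length (rotate ?t Q)" by (simp add: rot_def)
  next
    fix k assume "k < length (rot Q s)"
    then have k: "k < length Q" by (simp add: rot_def)
    have "nat ((int k + s) mod int (length Q)) = (k + ?t) mod length Q"
      using assms aux2[of "length Q" k s] by simp
    then show "rot Q s ! k = rotate ?t Q ! k" using k by (simp add: rot_def nth_rotate add.commute)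
  qed
  then show ?thesis using t by (simp add: rotate_drop_take)
qed




lemma crep: "concat (replicate (Suc k) X) = concat (replicate k X) @ X"
  by (induction k) auto

lemma crep_shift: "concat (replicate k (A @ B)) @ A = A @ concat (replicate k (B @ A))"
  by (induction k) auto

lemma ED_rot_rep:
  "ED xs (concat (replicate d (A @ B))) \<le> ED xs (concat (replicate d (B @ A))) + 2 * min (length A) (length B)"
proof (cases d)
  case 0 then show ?thesis by simp
next
  case (Suc k)
  let ?W = "concat (replicate k (B @ A)) @ B"
  let ?V = "A @ concat (replicate k (B @ A))"
  have q1: "concat (replicate d (A @ B)) = A @ ?W"
    using Suc crep[of k "A@B"] crep_shift[of k A B] by simp
  have r1: "concat (replicate d (B @ A)) = ?W @ A"
    using Suc crep[of k "B@A"] by simp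
  have q2: "concat (replicate d (A @ B)) = ?V @ B"
    using Suc crep[of k "A@B"] crep_shift[of k A B] by simp
  have r2: "concat (replicate d (B @ A)) = B @ ?V"
    using Suc by simp
  show ?thesis
    using ED_rotA[of xs A ?W] ED_rotB[of xs ?V B] q1 q2 r1 r2 by (simp add: min_def)
qed

lemma upper:
  fixes P Q :: "'a list" and s :: int
  assumes "length P = length Q" "length P > 0" "r < length P"
  shows "ED (concat (replicate d P) @ take r P) (concat (replicate d Q) @ take r Q)
     \<le> ED (take r P) (take r Q) + (d * ED P (rot Q s) + 2 * nat \<bar>s\<bar>)"
proof -
  let ?p = "length Q"
  let ?t = "nat (s mod int ?p)"
  let ?A = "take ?t Q" and ?B = "drop ?t Q"
  have Q: "Q \<noteq> []" using assms by auto
  have t: "?t < ?p" using Q by (simp add: nat_less_iff)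
  have rq: "rot Q s = ?B @ ?A" using rot_rotate[OF Q] by simp
  have mn: "min (length ?A) (length ?B) \<le> nat \<bar>s\<bar>"
  proof (cases "s \<ge> 0")
    case True
    then have "s mod int ?p \<le> s" using Q by (simp add: zmod_le_nonneg_dividend)
    then show ?thesis using t by simp
  next
    case False
    then have "s + int ?p \<le> s mod int ?p" using Q int_mod_neg[of "int ?p" s] by simp
    then show ?thesis using t by simp
  qed
  have "ED (concat (replicate d P) @ take r P) (concat (replicate d Q) @ take r Q)
     \<le> ED (concat (replicate d P)) (concat (replicate d Q)) + ED (take r P) (take r Q)"
    by (rule ED_subadd)
  also have "ED (concat (replicate d P)) (concat (replicate d Q))
     \<le> ED (concat (replicate d P)) (concat (replicate d (?B @ ?A))) + 2 * nat \<bar>s\<bar>"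
    using ED_rot_rep[of "concat (replicate d P)" d ?A ?B] mn by simp
  also have "ED (concat (replicate d P)) (concat (replicate d (?B @ ?A))) \<le> d * ED P (rot Q s)"
    using ED_rep[of d P "?B @ ?A"] rq by simp
  finally show ?thesis by simp
qed



lemma sum_split_at: "(i::nat) \<le> d \<Longrightarrow> sum g {..<d} = sum g {..<i} + sum g {i..<d}"
  using sum.atLeastLessThan_concat[of 0 i d g] by (simp add: atLeast0LessThan)

lemma drop_split: "a \<le> b \<Longrightarrow> drop a Y = take (b - a) (drop a Y) @ drop b Y"
  by (metis append_take_drop_id drop_drop le_add_diff_inverse2)

lemma len_concat_take: "i \<le> length Ys \<Longrightarrow> int (length (concat (take i Ys))) = (\<Sum>j<i. int (length (Ys!j)))"
proof (induction i)
  case 0 then show ?case by simp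
next
  case (Suc i)
  then show ?case by (simp add: take_Suc_conv_app_nth)
qed

lemma abs_sum_le: "(\<And>j. j \<in> A \<Longrightarrow> \<bar>g j\<bar> \<le> h j) \<Longrightarrow> \<bar>sum g A\<bar> \<le> (sum h A :: int)"
proof -
  assume a: "\<And>j. j \<in> A \<Longrightarrow> \<bar>g j\<bar> \<le> h j"
  have "\<bar>sum g A\<bar> \<le> (\<Sum>j\<in>A. \<bar>g j\<bar>)" by (rule sum_abs)
  also have "\<dots> \<le> sum h A" using a by (rule sum_mono)
  finally show ?thesis .
qed

lemma ED_len_int: "\<bar>int (length xs) - int (length ys)\<bar> \<le> int (ED xs ys)"
  using ED_len[of xs ys] ED_len[of ys xs] ED_sym[of xs ys] by linarith



lemma len_crep: "length (concat (replicate d Q)) = d * length Q"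
  by (induction d) auto

lemma lower:
  fixes P Q :: "'a list"
  assumes lens: "length P = length Q" and p0: "length P > 0" and rp: "r < length P"
    and n: "n = d * length P + r"
    and X: "X = concat (replicate d P) @ take r P"
    and Yd: "Y = concat (replicate d Q) @ take r Q"
    and Ym: "Y = map (\<lambda>i. Q!(i mod length Q)) [0..<n]"
  shows "\<exists>s. ED (take r P) (take r Q) + (d * ED P (rot Q s) + 2 * nat \<bar>s\<bar>) \<le> 3 * ED X Y"
proof -
  define p where "p = length P"
  define f where "f = (\<lambda>i. Q!(i mod length Q))"
  have Qp: "length Q = p" using lens p_def by simp
  have Q: "Q \<noteq> []" using p0 lens by auto
  obtain Ys Yt where dec: "length Ys = length (replicate d P)" "Y = concat Ys @ Yt"
     "ED (concat (replicate d P) @ take r P) Y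
        = (\<Sum>j<length (replicate d P). ED (replicate d P!j) (Ys!j)) + ED (take r P) Yt"
    using ED_decomp by blast
  define e where "e j = ED P (Ys!j)" for j
  define S where "S = (\<Sum>j<d. e j)"
  define et where "et = ED (take r P) Yt"
  have lenYs: "length Ys = d" using dec(1) by simp
  have EXY: "ED X Y = S + et"
    using dec(3) unfolding X S_def e_def et_def by simp
  define yy where "yy i = length (concat (take i Ys))" for i
  have yyd: "yy d = length (concat Ys)" using lenYs yy_def by simp
  have lenY: "length Y = n" using Ym by simp
  have nyy: "n = yy d + length Yt" using dec(2) lenY yyd by simp
  have lenPr: "length (take r P) = r" "length (take r Q) = r" using rp lens by auto
  have tailQ: "take r Q = drop (d*p) Y" using Yd Qp len_crep[of d Q] by simp
  have tailY: "Yt = drop (yy d) Y" using dec(2) yyd by simp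
  have tailED: "ED (take r P) (take r Q) \<le> 2 * et"
  proof (cases "yy d \<le> d * p")
    case True
    then have "Yt = take (d*p - yy d) (drop (yy d) Y) @ take r Q"
      using drop_split[of "yy d" "d*p" Y] True tailQ tailY by simp
    then show ?thesis unfolding et_def
      using ED_suf2[of "take r P" "take r Q" "take (d*p - yy d) (drop (yy d) Y)" Yt] lenPr by simp
  next
    case False
    then have "take r Q = take (yy d - d*p) (drop (d*p) Y) @ Yt"
      using drop_split[of "d*p" "yy d" Y] tailQ tailY by simp
    then show ?thesis unfolding et_def
      using ED_suf2[of "take r P" "take r Q" "take (yy d - d*p) (drop (d*p) Y)" Yt] lenPr by simp
  qed
  show ?thesis
  proof (cases "d = 0")
    case True
    have "ED (take r P) (take r Q) + (d * ED P (rot Q 0) + 2 * nat \<bar>0::int\<bar>) \<le> 3 * ED X Y"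
      using True tailED EXY S_def by simp
    then show ?thesis by blast
  next
    case False
    obtain i where i: "i < d" "\<And>j. j < d \<Longrightarrow> e i \<le> e j"
      using ex_has_least_nat[of "\<lambda>i. i < d" 0 e] False by auto
    define s where "s = int (yy i) - int (i * p)"
    have dS: "d * e i \<le> S"
    proof -
      have "(\<Sum>j<d. e i) \<le> S" unfolding S_def using i(2) by (intro sum_mono) auto
      then show ?thesis by simp
    qed
    have Ysplit: "Ys = take i Ys @ Ys!i # drop (Suc i) Ys"
      using i(1) lenYs id_take_nth_drop by auto
    have Yeq: "Y = concat (take i Ys) @ (Ys!i @ concat (drop (Suc i) Ys) @ Yt)"
        using dec(2) arg_cong[OF Ysplit, of concat] by simp
    have dropi: "drop (yy i) Y = Ys!i @ concat (drop (Suc i) Ys) @ Yt"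
      using Yeq unfolding yy_def by simp
    have yyle: "yy i + length (Ys!i) \<le> n"
      using arg_cong[OF Yeq, of length] lenY unfolding yy_def by simp
    have Ysi: "Ys!i = map f [yy i..<yy i + length (Ys!i)]"
    proof -
      have "Ys!i = take (length (Ys!i)) (drop (yy i) Y)" using dropi by simp
      also have "\<dots> = map f (take (length (Ys!i)) [yy i..<n])"
        using Ym f_def by (simp add: drop_map take_map)
      also have "take (length (Ys!i)) [yy i..<n] = [yy i..<yy i + length (Ys!i)]"
        using yyle by (simp add: take_upt)
      finally show ?thesis .
    qed
    have rq: "rot Q s = map f [yy i..<yy i + p]"
      using rot_eq[OF Q, of s "yy i" i] s_def Qp f_def by simp
    have lrot: "length P = length (rot Q s)" using Qp p_def by (simp add: rot_def)
    have blockED: "ED P (rot Q s) \<le> 2 * e i"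
    proof (cases "length (Ys!i) \<le> p")
      case True
      have eq: "rot Q s = Ys!i @ map f [yy i + length (Ys!i)..<yy i + p]"
        using rq Ysi upt_add_eq_append[of "yy i" "yy i + length (Ys!i)" "p - length (Ys!i)"] True
        by simp
      show ?thesis using ED_pref2[OF lrot disjI1[OF eq]] unfolding e_def .
    next
      case False
      have eq: "Ys!i = rot Q s @ map f [yy i + p..<yy i + length (Ys!i)]"
        using rq Ysi upt_add_eq_append[of "yy i" "yy i + p" "length (Ys!i) - p"] False
        by simp
      show ?thesis using ED_pref2[OF lrot disjI2[OF eq]] unfolding e_def .
    qed
    have yyi: "int (yy i) = (\<Sum>j<i. int (length (Ys!j)))"
      unfolding yy_def by (rule len_concat_take) (use i(1) lenYs in simp)
    have yydi: "int (yy d) = (\<Sum>j<d. int (length (Ys!j)))"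
      unfolding yy_def by (rule len_concat_take) (use lenYs in simp)
    have ej: "\<bar>int (length (Ys!j)) - int p\<bar> \<le> int (e j)" for j
      unfolding e_def p_def using ED_len_int[of "Ys!j" P] ED_sym[of P "Ys!j"] by linarith
    have b1: "\<bar>s\<bar> \<le> (\<Sum>j<i. int (e j))"
    proof -
      have "s = (\<Sum>j<i. int (length (Ys!j)) - int p)"
        unfolding s_def yyi by (simp add: sum_subtractf)
      then show ?thesis using abs_sum_le[of "{..<i}" "\<lambda>j. int (length (Ys!j)) - int p"] ej by simp
    qed
    have b2: "\<bar>s\<bar> \<le> (\<Sum>j\<in>{i..<d}. int (e j)) + int et"
    proof -
      have sp1: "(\<Sum>j<d. int (length (Ys!j))) = (\<Sum>j<i. int (length (Ys!j))) + (\<Sum>j\<in>{i..<d}. int (length (Ys!j)))"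
        by (rule sum_split_at) (use i(1) in simp)
      have "int n = int (yy d) + int (length Yt)" using nyy by simp
      moreover have "int n = int (i*p) + int ((d - i) * p) + int r"
        using n p_def i(1) by (simp add: diff_mult_distrib) 
      ultimately have "s = (\<Sum>j\<in>{i..<d}. int p - int (length (Ys!j))) + (int r - int (length Yt))"
        unfolding s_def yyi using yydi sp1 i(1) by (simp add: sum_subtractf)
      moreover have "\<bar>\<Sum>j\<in>{i..<d}. int p - int (length (Ys!j))\<bar> \<le> (\<Sum>j\<in>{i..<d}. int (e j))"
        using abs_sum_le[of "{i..<d}" "\<lambda>j. int p - int (length (Ys!j))"] ej by (simp add: abs_minus_commute)
      moreover have "\<bar>int r - int (length Yt)\<bar> \<le> int et"
        unfolding et_def using ED_len_int[of "take r P" Yt] lenPr by simp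
      ultimately show ?thesis by linarith
    qed
    have "int S = (\<Sum>j<i. int (e j)) + (\<Sum>j\<in>{i..<d}. int (e j))"
      unfolding S_def using sum_split_at[OF less_imp_le[OF i(1)], of "\<lambda>j. int (e j)"] by simp
    then have "2 * \<bar>s\<bar> \<le> int S + int et" using b1 b2 by linarith
    then have "2 * nat \<bar>s\<bar> \<le> S + et" by linarith
    moreover have "d * ED P (rot Q s) \<le> 2 * S"
    proof -
      have "d * ED P (rot Q s) \<le> d * (2 * e i)" using blockED by (rule mult_le_mono2)
      also have "\<dots> = 2 * (d * e i)" by simp
      also have "\<dots> \<le> 2 * S" using dS by simp
      finally show ?thesis .
    qed
    ultimately have "ED (take r P) (take r Q) + (d * ED P (rot Q s) + 2 * nat \<bar>s\<bar>) \<le> 3 * ED X Y"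
      using tailED EXY by linarith
    then show ?thesis by blast
  qed
qed


theorem lemma5p4:
  fixes P Q :: "'a list" and n :: nat
  assumes "length P = length Q" and "length P > 0" and "n > 0"
  defines "p \<equiv> length P"
  defines "d \<equiv> n div p" and "r \<equiv> n mod p"
  defines "X \<equiv> pow_prefix P n" and "Y \<equiv> pow_prefix Q n"
  defines "M \<equiv> (LEAST v. \<exists>s::int. v = d * ED P (rot Q s) + 2 * nat \<bar>s\<bar>)"
  shows "ED X Y \<le> ED (take r P) (take r Q) + M
       \<and> ED (take r P) (take r Q) + M \<le> 3 * ED X Y"
proof -
  have P: "P \<noteq> []" "Q \<noteq> []" using assms(1,2) by auto
  have rp: "r < length P" using assms(2) unfolding r_def p_def by simp
  have nn: "n = d * length P + r" unfolding d_def r_def p_def by simp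
  have Xe: "X = concat (replicate d P) @ take r P"
    unfolding X_def pow_prefix_def using pp_split[OF P(1), of r d] rp nn by simp
  have Ye: "Y = concat (replicate d Q) @ take r Q"
    unfolding Y_def pow_prefix_def using pp_split[OF P(2), of r d] rp nn assms(1) by simp
  have Ym: "Y = map (\<lambda>i. Q!(i mod length Q)) [0..<n]"
    unfolding Y_def pow_prefix_def by simp
  have ex: "\<exists>s::int. M = d * ED P (rot Q s) + 2 * nat \<bar>s\<bar>"
    unfolding M_def by (rule LeastI_ex) blast
  then obtain s0 :: int where s0: "M = d * ED P (rot Q s0) + 2 * nat \<bar>s0\<bar>" by blast
  have up: "ED X Y \<le> ED (take r P) (take r Q) + M"
    using upper[OF assms(1,2) rp, of d s0] Xe Ye s0 by simp
  obtain s1 :: int where s1: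
    "ED (take r P) (take r Q) + (d * ED P (rot Q s1) + 2 * nat \<bar>s1\<bar>) \<le> 3 * ED X Y"
    using lower[OF assms(1,2) rp nn Xe Ye Ym] by blast
  have "M \<le> d * ED P (rot Q s1) + 2 * nat \<bar>s1\<bar>"
    unfolding M_def by (rule Least_le) blast
  with s1 up show ?thesis by linarith
qed

end
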